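(* Let $p\ge2$, $\theta>1$, $a>0$ and $\lambda>0$, and write $\phi_p(t)=|t|^{p-2}t$. Let $h\in C^1[0,a]$ be such that $r^{\theta-1}\phi_p(h')\in C^1(0,a)$ and \[ (r^{\theta-1}\phi_p(h'))'+\lambda r^{\theta-1}\phi_p(h)=0\quad\text{in }(0,a). \] Then: (1) $h'(0)=0$; (2) $r^{\theta-1}\phi_p(h')\in C^1[0,a)$; (3) $(r^{\theta-1}\phi_p(h'))'(0)=0$. *)

theory Defs
  imports "HOL-Analysis.Analysis"
begin

definition phi_p :: "real \<Rightarrow> real \<Rightarrow> real" where
  "phi_p p t = \<bar>t\<bar> powr (p - 2) * t"

end

theory Submission
  imports Defs
begin

lemma abs_phi: "\<bar>phi_p p t\<bar> = \<bar>t\<bar> powr (p-1)"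
proof (cases "t = 0")
  case True then show ?thesis by (simp add: phi_p_def)
next
  case False
  have "\<bar>phi_p p t\<bar> = \<bar>t\<bar> powr (p-2) * \<bar>t\<bar> powr 1"
    using False by (simp add: phi_p_def abs_mult)
  also have "\<dots> = \<bar>t\<bar> powr ((p-2) + 1)" by (simp only: powr_add)
  also have "\<dots> = \<bar>t\<bar> powr (p-1)" by simp
  finally show ?thesis .
qed

lemma phi_cont: assumes "p \<ge> 2" shows "isCont (phi_p p) t"
proof (cases "t = 0")
  case False
  have "isCont (\<lambda>t. \<bar>t\<bar> powr (p - 2) * t) t"
    using False by (intro continuous_intros continuous_powr) auto
  then show ?thesis unfolding phi_p_def by (simp add: fun_eq_iff)
next
  case True
  have "(phi_p p \<longlongrightarrow> 0) (at 0)"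
  proof (rule Lim_null_comparison)
    show "\<forall>\<^sub>F x in at 0. norm (phi_p p x) \<le> \<bar>x\<bar> powr (p-1)" by (simp add: abs_phi)
    show "((\<lambda>x. \<bar>x\<bar> powr (p-1)) \<longlongrightarrow> 0) (at (0::real))"
      using assms by (intro tendsto_zero_powrI tendsto_rabs_zero tendsto_ident_at) auto
  qed
  then show ?thesis using True by (simp add: isCont_def phi_p_def)
qed

theorem mainTheorem15:
  fixes p \<theta> a lam :: real and h h' w' :: "real \<Rightarrow> real"
  assumes hp: "p \<ge> 2" and h\<theta>: "\<theta> > 1" and ha: "a > 0" and hlam: "lam > 0"
    and hC1: "\<forall>r\<in>{0..a}. (h has_real_derivative h' r) (at r within {0..a})"
    and hC1c: "continuous_on {0..a} h'"
    and wC1: "\<forall>r\<in>{0<..<a}.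
        ((\<lambda>s. s powr (\<theta> - 1) * phi_p p (h' s)) has_real_derivative w' r) (at r)"
    and wC1c: "continuous_on {0<..<a} w'"
    and eq: "\<forall>r\<in>{0<..<a}. w' r + lam * r powr (\<theta> - 1) * phi_p p (h r) = 0"
  shows "h' 0 = 0 \<and>
    (\<exists>W'. (\<forall>r\<in>{0..<a}.
        ((\<lambda>s. s powr (\<theta> - 1) * phi_p p (h' s)) has_real_derivative W' r) (at r within {0..<a}))
      \<and> continuous_on {0..<a} W' \<and> W' 0 = 0)"
proof -
  have hcont: "continuous_on {0..a} h"
    using hC1 by (meson DERIV_continuous continuous_on_eq_continuous_within)
  obtain M where M: "\<forall>t\<in>{0..a}. \<bar>h t\<bar> \<le> M"
    using compact_imp_bounded[OF compact_continuous_image[OF hcont compact_Icc]]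
    unfolding bounded_iff by auto
  obtain B where B: "\<forall>t\<in>{0..a}. \<bar>h' t\<bar> \<le> B"
    using compact_imp_bounded[OF compact_continuous_image[OF hC1c compact_Icc]]
    unfolding bounded_iff by auto
  define K where "K = M powr (p-1)"
  define B' where "B' = B powr (p-1)"
  have Kb: "\<bar>phi_p p (h t)\<bar> \<le> K" if "t \<in> {0..a}" for t
    unfolding abs_phi K_def using M that hp by (intro powr_mono2) auto
  have Bb: "\<bar>phi_p p (h' t)\<bar> \<le> B'" if "t \<in> {0..a}" for t
    unfolding abs_phi B'_def using B that hp by (intro powr_mono2) auto
  define w where "w = (\<lambda>s. s powr (\<theta> - 1) * phi_p p (h' s))"
  define W where "W = (\<lambda>r. - lam * r powr (\<theta> - 1) * phi_p p (h r))"
  have wd: "(w has_real_derivative W r) (at r)" if "r \<in> {0<..<a}" for r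
  proof -
    have "w' r + lam * r powr (\<theta> - 1) * phi_p p (h r) = 0" using eq that by auto
    then have "w' r = W r" unfolding W_def by (simp add: algebra_simps)
    then show ?thesis using wC1 that unfolding w_def by (metis greaterThanLessThan_iff)
  qed
  have Wb: "\<bar>W t\<bar> \<le> lam * K * t powr (\<theta> - 1)" if "t \<in> {0..a}" for t
  proof -
    have "\<bar>W t\<bar> = lam * t powr (\<theta> - 1) * \<bar>phi_p p (h t)\<bar>"
      unfolding W_def using hlam by (simp add: abs_mult)
    also have "\<dots> \<le> lam * t powr (\<theta> - 1) * K"
      using Kb[OF that] hlam by (intro mult_left_mono) auto
    finally show ?thesis by (simp add: algebra_simps)
  qed
  have wb0: "\<bar>w e\<bar> \<le> e powr (\<theta> - 1) * B'" if "e \<in> {0..a}" for e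
    unfolding w_def using Bb[OF that] by (simp add: abs_mult mult_left_mono)
  have key: "\<bar>w s\<bar> \<le> lam * K * s powr (\<theta> - 1) * s" if s: "s \<in> {0<..<a}" for s
  proof -
    have step: "\<bar>w s\<bar> \<le> lam * K * s powr (\<theta> - 1) * (s - e) + e powr (\<theta> - 1) * B'"
      if e: "0 < e" "e < s" for e
    proof -
      have "\<And>x. e \<le> x \<Longrightarrow> x \<le> s \<Longrightarrow> DERIV w x :> W x"
        using wd e s by auto
      from MVT2[OF e(2) this] obtain z where z: "e < z" "z < s" "w s - w e = (s - e) * W z"
        by auto
      have "\<bar>W z\<bar> \<le> lam * K * z powr (\<theta> - 1)" using Wb z e s by auto
      also have "\<dots> \<le> lam * K * s powr (\<theta> - 1)"
      proof -
        have "K \<ge> 0" using Kb[of 0] ha by auto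
        moreover have "z powr (\<theta> - 1) \<le> s powr (\<theta> - 1)"
          using z e h\<theta> by (intro powr_mono2) auto
        ultimately show ?thesis using hlam by (intro mult_left_mono) auto
      qed
      finally have "\<bar>w s - w e\<bar> \<le> (s - e) * (lam * K * s powr (\<theta> - 1))"
        using z e by (simp add: abs_mult mult_left_mono)
      moreover have "\<bar>w e\<bar> \<le> e powr (\<theta> - 1) * B'" using wb0 e s by auto
      ultimately show ?thesis by (simp add: algebra_simps)
    qed
    have lim: "((\<lambda>e. lam * K * s powr (\<theta> - 1) * (s - e) + e powr (\<theta> - 1) * B')
        \<longlongrightarrow> lam * K * s powr (\<theta> - 1) * (s - 0) + 0 * B') (at_right 0)"
      using h\<theta>
      by (intro tendsto_intros tendsto_zero_powrI tendsto_ident_at)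
         (auto simp: eventually_at_right_less eventually_at_filter)
    have "\<bar>w s\<bar> \<le> lam * K * s powr (\<theta> - 1) * (s - 0) + 0 * B'"
    proof (rule tendsto_le[OF _ lim tendsto_const])
      show "\<forall>\<^sub>F x in at_right 0. \<bar>w s\<bar> \<le> lam * K * s powr (\<theta> - 1) * (s - x) + x powr (\<theta> - 1) * B'"
        unfolding eventually_at_right_field using s step by (intro exI[of _ s]) auto
    qed auto
    also have "\<dots> = lam * K * s powr (\<theta> - 1) * s" by simp
    finally show ?thesis .
  qed
  have key2: "\<bar>w s\<bar> \<le> lam * K * s powr (\<theta> - 1) * s" if s: "s \<in> {0<..<a}" for s
    using key[OF s] .
  have h0: "h' 0 = 0"
  proof (rule ccontr)
    assume nz: "h' 0 \<noteq> 0"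
    have l1: "((\<lambda>s. \<bar>h' s\<bar> powr (p-1)) \<longlongrightarrow> \<bar>h' 0\<bar> powr (p-1)) (at_right 0)"
      using continuous_on_Icc_at_rightD[OF hC1c ha] nz
      by (intro tendsto_powr tendsto_intros) auto
    have l2: "((\<lambda>s. lam * K * s) \<longlongrightarrow> lam * K * 0) (at_right 0)"
      by (intro tendsto_intros)
    have "\<bar>h' 0\<bar> powr (p-1) \<le> lam * K * 0"
    proof (rule tendsto_le[OF _ l2 l1])
      show "\<forall>\<^sub>F x in at_right 0. \<bar>h' x\<bar> powr (p - 1) \<le> lam * K * x"
        unfolding eventually_at_right_field
      proof (intro exI[of _ a] conjI allI impI)
        fix x :: real assume x: "0 < x" "x < a"
        have "x powr (\<theta> - 1) * \<bar>h' x\<bar> powr (p - 1) = \<bar>w x\<bar>"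
          unfolding w_def by (simp add: abs_mult abs_phi)
        also have "\<dots> \<le> x powr (\<theta> - 1) * (lam * K * x)" using key2[of x] x by (simp add: mult_ac)
        finally show "\<bar>h' x\<bar> powr (p - 1) \<le> lam * K * x"
          using x by (simp add: mult_le_cancel_left)
      qed (use ha in auto)
    qed auto
    then show False using nz by simp
  qed
  have d0: "(w has_real_derivative 0) (at 0 within {0..<a})"
  proof -
    have "((\<lambda>y. (w y - w 0) / (y - 0)) \<longlongrightarrow> 0) (at 0 within {0..<a})"
    proof (rule Lim_null_comparison)
      show "\<forall>\<^sub>F x in at 0 within {0..<a}. norm ((w x - w 0) / (x - 0)) \<le> lam * K * x powr (\<theta> - 1)"
        unfolding eventually_at_filter
      proof (intro always_eventually allI impI)
        fix x :: real assume x: "x \<noteq> 0" "x \<in> {0..<a}"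
        then have "x \<in> {0<..<a}" by auto
        have w0: "w 0 = 0" by (simp add: w_def)
        have "norm ((w x - w 0) / (x - 0)) = \<bar>w x\<bar> / x" using x by (simp add: w0)
        also have "\<dots> \<le> lam * K * x powr (\<theta> - 1)"
          using key2[OF \<open>x \<in> {0<..<a}\<close>] x by (simp add: pos_divide_le_eq)
        finally show "norm ((w x - w 0) / (x - 0)) \<le> lam * K * x powr (\<theta> - 1)" .
      qed
      show "((\<lambda>x. lam * K * x powr (\<theta> - 1)) \<longlongrightarrow> 0) (at 0 within {0..<a})"
      proof -
        have "((\<lambda>x. x powr (\<theta> - 1)) \<longlongrightarrow> 0) (at 0 within {0..<a})"
          using h\<theta> by (intro tendsto_zero_powrI tendsto_ident_at)
             (auto simp: eventually_at_filter)
        from tendsto_mult_right_zero[OF this, of "lam * K"] show ?thesis .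
      qed
    qed
    then show ?thesis by (simp add: has_field_derivative_iff)
  qed
  have W0: "W 0 = 0" unfolding W_def using h\<theta> by simp
  have Wc: "continuous_on {0..<a} W"
  proof -
    have c1: "continuous_on {0..<a} (\<lambda>r. r powr (\<theta> - 1))"
      using h\<theta> by (intro continuous_on_powr' continuous_intros) auto
    have c2: "continuous_on {0..<a} (\<lambda>r. phi_p p (h r))"
    proof (rule continuous_on_compose2[of UNIV "phi_p p"])
      show "continuous_on UNIV (phi_p p)"
        using phi_cont[OF hp] by (simp add: continuous_at_imp_continuous_on)
      show "continuous_on {0..<a} h" by (rule continuous_on_subset[OF hcont]) auto
    qed auto
    show ?thesis unfolding W_def using c1 c2 by (intro continuous_on_mult[OF continuous_on_mult[OF continuous_on_const c1] c2])
  qed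
  have "\<forall>r\<in>{0..<a}. (w has_real_derivative W r) (at r within {0..<a})"
  proof
    fix r assume r: "r \<in> {0..<a}"
    show "(w has_real_derivative W r) (at r within {0..<a})"
    proof (cases "r = 0")
      case True then show ?thesis using d0 W0 by simp
    next
      case False then show ?thesis using wd[of r] r by (auto intro: has_field_derivative_at_within)
    qed
  qed
  then show ?thesis using h0 Wc W0 unfolding w_def by blast
qed

end
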